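(* Let $r$ be a Hermitian symmetric polynomial in one complex variable $z$ and let $r^*$ be its reflection. Then $r\in\mathcal{Q}(1)$ if and only if $r^*\in\mathcal{Q}(1)$, and $r\in\mathcal{Q}'(1)$ if and only if $r^*\in\mathcal{Q}'(1)$.
   Context: If $r(z,\overline z)=\sum c_{jk}z^j\overline z^k$ has degree $m$ in $z$ (largest $j$ with some $c_{jk}\ne0$), its reflection is the Hermitian symmetric polynomial $r^*(z,\overline z)=|z|^{2m}r(1/z,1/\overline z)$. $\mathcal{Q}(1)$: Hermitian symmetric $r$ with $r=\|F\|^2/\|G\|^2$ for holomorphic polynomial mappings $F,G$, $G\not\equiv0$. $\mathcal{Q}'(1)$: $r$ with $r(z,\overline z)\ge0$ for all $z$ such that there exist a Hermitian symmetric $s\ge0$, not identically $0$, and a holomorphic polynomial mapping $F$ with $rs=\|F\|^2$. *)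

theory Defs
  imports Complex_Main "HOL-Computational_Algebra.Polynomial"
begin

text \<open>A polynomial r(z, conj z) = sum c j k z^j (conj z)^k in one complex variable is
represented by its coefficient function c (finitely supported).\<close>

definition hsym :: "(nat \<Rightarrow> nat \<Rightarrow> complex) \<Rightarrow> bool" where
  "hsym c \<longleftrightarrow> finite {(j, k). c j k \<noteq> 0} \<and> (\<forall>j k. c j k = cnj (c k j))"

definition heval :: "(nat \<Rightarrow> nat \<Rightarrow> complex) \<Rightarrow> complex \<Rightarrow> complex" where
  "heval c z = (\<Sum>(j, k)\<in>{(j, k). c j k \<noteq> 0}. c j k * z ^ j * cnj z ^ k)"

definition zdeg :: "(nat \<Rightarrow> nat \<Rightarrow> complex) \<Rightarrow> nat" where
  "zdeg c = (if \<forall>j k. c j k = 0 then 0 else Max {j. \<exists>k. c j k \<noteq> 0})"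

text \<open>Reflection r*(z, conj z) = |z|^(2m) r(1/z, 1/conj z), written on coefficients.\<close>
definition reflect :: "(nat \<Rightarrow> nat \<Rightarrow> complex) \<Rightarrow> (nat \<Rightarrow> nat \<Rightarrow> complex)" where
  "reflect c = (\<lambda>a b. if a \<le> zdeg c \<and> b \<le> zdeg c then c (zdeg c - a) (zdeg c - b) else 0)"

definition normsq :: "complex poly list \<Rightarrow> complex \<Rightarrow> real" where
  "normsq F z = (\<Sum>f\<leftarrow>F. (cmod (poly f z))\<^sup>2)"

definition inQ1 :: "(nat \<Rightarrow> nat \<Rightarrow> complex) \<Rightarrow> bool" where
  "inQ1 c \<longleftrightarrow> hsym c \<and>
     (\<exists>F G. (\<exists>g\<in>set G. g \<noteq> 0) \<and>
        (\<forall>z. heval c z * of_real (normsq G z) = of_real (normsq F z)))"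

definition inQ1' :: "(nat \<Rightarrow> nat \<Rightarrow> complex) \<Rightarrow> bool" where
  "inQ1' c \<longleftrightarrow> hsym c \<and> (\<forall>z. 0 \<le> Re (heval c z)) \<and>
     (\<exists>s F. hsym s \<and> (\<forall>z. 0 \<le> Re (heval s z)) \<and> (\<exists>z. heval s z \<noteq> 0) \<and>
        (\<forall>z. heval c z * heval s z = of_real (normsq F z)))"

end

theory Submission
  imports Defs
begin

definition RR :: "nat \<Rightarrow> (nat \<Rightarrow> nat \<Rightarrow> complex) \<Rightarrow> (nat \<Rightarrow> nat \<Rightarrow> complex)" where
  "RR n c = (\<lambda>a b. if a \<le> n \<and> b \<le> n then c (n - a) (n - b) else 0)"

definition bnd :: "nat \<Rightarrow> (nat \<Rightarrow> nat \<Rightarrow> complex) \<Rightarrow> bool" where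
  "bnd n c \<longleftrightarrow> (\<forall>j k. c j k \<noteq> 0 \<longrightarrow> j \<le> n \<and> k \<le> n)"

definition PR :: "nat \<Rightarrow> complex poly \<Rightarrow> complex poly" where
  "PR e f = monom 1 (e - degree f) * reflect_poly f"

lemma heval_bnd:
  assumes "bnd n c"
  shows "heval c z = (\<Sum>j\<le>n. \<Sum>k\<le>n. c j k * z ^ j * cnj z ^ k)"
proof -
  have "heval c z = (\<Sum>(j, k)\<in>{..n}\<times>{..n}. c j k * z ^ j * cnj z ^ k)"
    unfolding heval_def
    by (rule sum.mono_neutral_left) (use assms in \<open>auto simp: bnd_def\<close>)
  also have "\<dots> = (\<Sum>j\<le>n. \<Sum>k\<le>n. c j k * z ^ j * cnj z ^ k)"
    by (simp add: sum.cartesian_product)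
  finally show ?thesis .
qed

lemma bnd_RR: "bnd n (RR n c)"
  by (simp add: bnd_def RR_def)

lemma cmod_pow: "complex_of_real (cmod z ^ (2 * n)) = z ^ n * cnj z ^ n"
proof -
  have "complex_of_real (cmod z ^ (2 * n)) = (complex_of_real ((cmod z)\<^sup>2)) ^ n"
    by (simp add: power_mult)
  also have "\<dots> = z ^ n * cnj z ^ n" by (simp only: complex_norm_square power_mult_distrib)
  finally show ?thesis .
qed

lemma heval_RR:
  assumes b: "bnd n c" and z: "z \<noteq> 0"
  shows "heval (RR n c) z = of_real (cmod z ^ (2 * n)) * heval c (1 / z)"
proof -
  have "heval (RR n c) z = (\<Sum>a\<le>n. \<Sum>b\<le>n. c (n - a) (n - b) * z ^ a * cnj z ^ b)"
    by (subst heval_bnd[OF bnd_RR]) (simp add: RR_def)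
  also have "\<dots> = (\<Sum>j\<le>n. \<Sum>b\<le>n. c j (n - b) * z ^ (n - j) * cnj z ^ b)"
    by (rule sum.reindex_bij_witness[where i="\<lambda>i. n - i" and j="\<lambda>i. n - i"]) auto
  also have "\<dots> = (\<Sum>j\<le>n. \<Sum>k\<le>n. c j k * z ^ (n - j) * cnj z ^ (n - k))"
    by (rule sum.cong[OF refl], rule sum.reindex_bij_witness[where i="\<lambda>i. n - i" and j="\<lambda>i. n - i"]) auto
  also have "\<dots> = (\<Sum>j\<le>n. \<Sum>k\<le>n. (z ^ n * cnj z ^ n) * (c j k * (1/z) ^ j * cnj (1/z) ^ k))"
  proof (intro sum.cong refl)
    fix j k assume "j \<in> {..n}" "k \<in> {..n}"
    then have jk: "j \<le> n" "k \<le> n" by auto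
    have cz: "cnj z \<noteq> 0" using z by simp
    show "c j k * z ^ (n - j) * cnj z ^ (n - k) = (z ^ n * cnj z ^ n) * (c j k * (1/z) ^ j * cnj (1/z) ^ k)"
      using jk z cz by (simp add: power_diff power_divide field_simps)
  qed
  also have "\<dots> = of_real (cmod z ^ (2 * n)) * heval c (1 / z)"
    by (simp only: cmod_pow heval_bnd[OF b] sum_distrib_left)
  finally show ?thesis .
qed

lemma hsym_RR: assumes "hsym c" shows "hsym (RR n c)"
proof -
  have "{(j, k). RR n c j k \<noteq> 0} \<subseteq> {..n} \<times> {..n}" by (auto simp: RR_def split: if_splits)
  then have "finite {(j, k). RR n c j k \<noteq> 0}" by (rule finite_subset) auto
  moreover have "\<forall>j k. RR n c j k = cnj (RR n c k j)"
  proof (intro allI)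
    fix j k
    have s: "c (n - j) (n - k) = cnj (c (n - k) (n - j))" using assms unfolding hsym_def by blast
    show "RR n c j k = cnj (RR n c k j)" by (simp add: RR_def s)
  qed
  ultimately show ?thesis unfolding hsym_def by blast
qed

lemma hsym_bnd: assumes "hsym c" shows "\<exists>n. bnd n c"
proof -
  have f: "finite {(j, k). c j k \<noteq> 0}" using assms unfolding hsym_def by blast
  define n where "n = Max (fst ` {(j, k). c j k \<noteq> 0} \<union> snd ` {(j, k). c j k \<noteq> 0})"
  have "bnd n c" unfolding bnd_def
  proof (intro allI impI)
    fix j k assume "c j k \<noteq> 0"
    then have "(j, k) \<in> {(j, k). c j k \<noteq> 0}" by simp
    then show "j \<le> n \<and> k \<le> n" unfolding n_def using f
      by (metis (no_types, lifting) Max_ge UnCI finite_UnI finite_imageI fst_conv image_eqI snd_conv)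
  qed
  then show ?thesis by blast
qed

lemma isCont_heval: "isCont (heval c) z"
  unfolding heval_def case_prod_beta
  by (intro continuous_intros)

lemma isCont_normsq: "isCont (\<lambda>z. complex_of_real (normsq F z)) z"
proof (induction F)
  case Nil then show ?case by (simp add: normsq_def)
next
  case (Cons f F)
  have e: "(\<lambda>z. complex_of_real (normsq (f # F) z)) =
      (\<lambda>z. complex_of_real ((cmod (poly f z))\<^sup>2) + complex_of_real (normsq F z))"
    by (simp add: normsq_def)
  show ?case unfolding e by (intro continuous_intros Cons)
qed

lemma ext0:
  fixes f g :: "complex \<Rightarrow> complex"
  assumes "isCont f 0" "isCont g 0" "\<forall>z. z \<noteq> 0 \<longrightarrow> f z = g z"
  shows "f 0 = g 0"
proof -
  have "f \<midarrow>0\<rightarrow> f 0" using assms(1) isCont_def by blast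
  then have "g \<midarrow>0\<rightarrow> f 0" using LIM_equal[OF assms(3)] by blast
  moreover have "g \<midarrow>0\<rightarrow> g 0" using assms(2) isCont_def by blast
  ultimately show ?thesis using LIM_unique by blast
qed

lemma nonneg0:
  fixes f :: "complex \<Rightarrow> complex"
  assumes "isCont f 0" "\<forall>z. z \<noteq> 0 \<longrightarrow> 0 \<le> Re (f z)"
  shows "0 \<le> Re (f 0)"
proof -
  have "((\<lambda>z. Re (f z)) \<longlongrightarrow> Re (f 0)) (at 0)"
    using assms(1) isCont_def tendsto_Re by blast
  moreover have "\<forall>\<^sub>F z in at 0. 0 \<le> Re (f z)"
    using assms(2) by (simp add: eventually_at_filter)
  ultimately show ?thesis by (rule tendsto_lowerbound) simp
qed

lemma nz_away:
  fixes f :: "complex \<Rightarrow> complex"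
  assumes "isCont f 0" "\<exists>z. f z \<noteq> 0"
  shows "\<exists>z. z \<noteq> 0 \<and> f z \<noteq> 0"
proof (cases "f 0 = 0")
  case True then show ?thesis using assms(2) by metis
next
  case False
  have "(f \<longlongrightarrow> f 0) (at 0)" using assms(1) isCont_def by blast
  then have "\<forall>\<^sub>F z in at 0. f z \<noteq> 0" using False tendsto_imp_eventually_ne by blast
  moreover have "\<forall>\<^sub>F z in at (0::complex). z \<noteq> 0" by (simp add: eventually_at_filter)
  ultimately have "\<forall>\<^sub>F z in at (0::complex). z \<noteq> 0 \<and> f z \<noteq> 0" by (rule eventually_conj[rotated])
  from eventually_happens[OF this] show ?thesis by auto
qed

lemma poly_PR:
  assumes "degree f \<le> e" "z \<noteq> 0"
  shows "poly (PR e f) z = z ^ e * poly f (1 / z)"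
proof -
  have "poly (PR e f) z = z ^ (e - degree f) * (z ^ degree f * poly f (inverse z))"
    using assms by (simp add: PR_def poly_monom poly_reflect_poly_nz)
  also have "\<dots> = z ^ e * poly f (1 / z)"
    using assms by (simp add: mult.assoc[symmetric] power_add[symmetric] inverse_eq_divide)
  finally show ?thesis .
qed

lemma PR_nz: "f \<noteq> 0 \<Longrightarrow> PR e f \<noteq> 0"
proof -
  assume "f \<noteq> 0"
  then have "reflect_poly f \<noteq> 0" by (metis coeff_0_reflect_poly_0_iff coeff_0)
  then show ?thesis by (simp add: PR_def)
qed

lemma normsq_PR:
  assumes "\<forall>f\<in>set F. degree f \<le> e" "z \<noteq> 0"
  shows "normsq (map (PR e) F) z = cmod z ^ (2 * e) * normsq F (1 / z)"
  using assms(1)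
proof (induction F)
  case Nil then show ?case by (simp add: normsq_def)
next
  case (Cons f F)
  have "(cmod (poly (PR e f) z))\<^sup>2 = cmod z ^ (2 * e) * (cmod (poly f (1/z)))\<^sup>2"
    using Cons.prems assms(2) by (simp add: poly_PR norm_mult norm_power power_mult_distrib power_mult[symmetric] mult.commute)
  then show ?case using Cons by (simp add: normsq_def distrib_left)
qed

lemma Q_transfer:
  assumes rel: "\<forall>z. z \<noteq> 0 \<longrightarrow> heval r1 z = of_real (cmod z ^ (2 * m)) * heval r2 (1 / z)"
    and G: "\<exists>g\<in>set G. g \<noteq> 0"
    and eq: "\<forall>z. heval r2 z * of_real (normsq G z) = of_real (normsq F z)"
  shows "\<exists>F G. (\<exists>g\<in>set G. g \<noteq> 0) \<and> (\<forall>z. heval r1 z * of_real (normsq G z) = of_real (normsq F z))"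
proof -
  define e where "e = Max (degree ` set F \<union> degree ` set G) + m"
  define d where "d = e - m"
  have eF: "\<forall>f\<in>set F. degree f \<le> e" unfolding e_def
    by (metis List.finite_set Max_ge UnCI finite_UnI finite_imageI image_eqI trans_le_add1)
  have dG: "\<forall>f\<in>set G. degree f \<le> d"
  proof
    fix f assume "f \<in> set G"
    then have "degree f \<le> Max (degree ` set F \<union> degree ` set G)" by (intro Max_ge) auto
    then show "degree f \<le> d" unfolding d_def e_def by simp
  qed
  have med: "m + d = e" unfolding d_def e_def by simp
  define G' where "G' = map (PR d) G"
  define F' where "F' = map (PR e) F"
  have G': "\<exists>g\<in>set G'. g \<noteq> 0" using G PR_nz unfolding G'_def by auto
  have nz: "heval r1 z * of_real (normsq G' z) = of_real (normsq F' z)" if z: "z \<noteq> 0" for z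
  proof -
    have "heval r1 z * of_real (normsq G' z) =
        of_real (cmod z ^ (2 * m) * cmod z ^ (2 * d)) * (heval r2 (1/z) * of_real (normsq G (1/z)))"
      using rel z unfolding G'_def by (simp add: normsq_PR[OF dG z])
    also have "\<dots> = of_real (cmod z ^ (2 * e) * normsq F (1/z))"
      using eq med by (simp add: power_add[symmetric] distrib_left[symmetric])
    also have "\<dots> = of_real (normsq F' z)" unfolding F'_def by (simp add: normsq_PR[OF eF z])
    finally show ?thesis .
  qed
  have "heval r1 0 * of_real (normsq G' 0) = of_real (normsq F' 0)"
    using ext0[of "\<lambda>z. heval r1 z * of_real (normsq G' z)" "\<lambda>z. of_real (normsq F' z)"] nz
    by (simp add: isCont_heval isCont_normsq continuous_intros)
  then have "\<forall>z. heval r1 z * of_real (normsq G' z) = of_real (normsq F' z)"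
    using nz by metis
  then show ?thesis using G' by blast
qed


lemma Re_ofreal_mult: "Re (complex_of_real a * w) = a * Re w"
  by simp

lemma nonneg_transfer:
  assumes rel: "\<forall>z. z \<noteq> 0 \<longrightarrow> heval r1 z = of_real (cmod z ^ (2 * m)) * heval r2 (1 / z)"
    and nn: "\<forall>z. 0 \<le> Re (heval r2 z)"
  shows "\<forall>z. 0 \<le> Re (heval r1 z)"
proof -
  have nz: "\<forall>z. z \<noteq> 0 \<longrightarrow> 0 \<le> Re (heval r1 z)"
    using rel nn by (simp add: Re_ofreal_mult)
  then have "0 \<le> Re (heval r1 0)" by (intro nonneg0 isCont_heval)
  then show ?thesis using nz by metis
qed

lemma Q'_transfer:
  assumes rel: "\<forall>z. z \<noteq> 0 \<longrightarrow> heval r1 z = of_real (cmod z ^ (2 * m)) * heval r2 (1 / z)"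
    and hs: "hsym s" and snn: "\<forall>z. 0 \<le> Re (heval s z)" and snz: "\<exists>z. heval s z \<noteq> 0"
    and eq: "\<forall>z. heval r2 z * heval s z = of_real (normsq F z)"
  shows "\<exists>s F. hsym s \<and> (\<forall>z. 0 \<le> Re (heval s z)) \<and> (\<exists>z. heval s z \<noteq> 0) \<and>
        (\<forall>z. heval r1 z * heval s z = of_real (normsq F z))"
proof -
  obtain n0 where n0: "bnd n0 s" using hsym_bnd[OF hs] by blast
  define n where "n = max n0 (Max (degree ` set F))"
  define e where "e = m + n"
  have bn: "bnd n s" using n0 unfolding bnd_def n_def by fastforce
  have eF: "\<forall>f\<in>set F. degree f \<le> e"
  proof
    fix f assume "f \<in> set F"
    then have "degree f \<le> Max (degree ` set F)" by (intro Max_ge) auto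
    then show "degree f \<le> e" unfolding e_def n_def by simp
  qed
  define s' where "s' = RR n s"
  define F' where "F' = map (PR e) F"
  have rels: "\<forall>z. z \<noteq> 0 \<longrightarrow> heval s' z = of_real (cmod z ^ (2 * n)) * heval s (1 / z)"
    unfolding s'_def using heval_RR[OF bn] by blast
  have hs': "hsym s'" unfolding s'_def by (rule hsym_RR[OF hs])
  have snn': "\<forall>z. 0 \<le> Re (heval s' z)" by (rule nonneg_transfer[OF rels snn])
  obtain z0 where z0: "z0 \<noteq> 0" "heval s z0 \<noteq> 0" using nz_away[OF isCont_heval snz] by blast
  have "heval s' (1 / z0) \<noteq> 0" using rels z0 by simp
  then have snz': "\<exists>z. heval s' z \<noteq> 0" by blast
  have nz: "heval r1 z * heval s' z = of_real (normsq F' z)" if z: "z \<noteq> 0" for z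
  proof -
    have "heval r1 z * heval s' z =
        of_real (cmod z ^ (2 * m) * cmod z ^ (2 * n)) * (heval r2 (1/z) * heval s (1/z))"
    proof -
      have h1: "heval r1 z = of_real (cmod z ^ (2 * m)) * heval r2 (1 / z)" using rel z by blast
      have h2: "heval s' z = of_real (cmod z ^ (2 * n)) * heval s (1 / z)" using rels z by blast
      show ?thesis unfolding h1 h2 of_real_mult by (simp only: ac_simps)
    qed
    also have "\<dots> = of_real (cmod z ^ (2 * e) * normsq F (1/z))"
    proof -
      have q1: "heval r2 (1/z) * heval s (1/z) = of_real (normsq F (1/z))" using eq by blast
      have q2: "cmod z ^ (2 * m) * cmod z ^ (2 * n) = cmod z ^ (2 * e)"
        unfolding e_def by (simp only: distrib_left power_add)
      show ?thesis unfolding q1 q2 of_real_mult ..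
    qed
    also have "\<dots> = of_real (normsq F' z)" unfolding F'_def by (simp add: normsq_PR[OF eF z])
    finally show ?thesis .
  qed
  have "heval r1 0 * heval s' 0 = of_real (normsq F' 0)"
    using ext0[of "\<lambda>z. heval r1 z * heval s' z" "\<lambda>z. of_real (normsq F' z)"] nz
    by (simp add: isCont_heval isCont_normsq continuous_intros)
  then have "\<forall>z. heval r1 z * heval s' z = of_real (normsq F' z)"
    using nz by metis
  then show ?thesis using hs' snn' snz' by blast
qed

lemma bnd_zdeg: assumes "hsym c" shows "bnd (zdeg c) c"
proof (cases "\<forall>j k. c j k = 0")
  case True then show ?thesis by (simp add: bnd_def)
next
  case False
  have f: "finite {(j, k). c j k \<noteq> 0}" using assms unfolding hsym_def by blast
  have sy: "\<And>j k. c j k = cnj (c k j)" using assms unfolding hsym_def by blast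
  have fin: "finite {j. \<exists>k. c j k \<noteq> 0}"
  proof -
    have "{j. \<exists>k. c j k \<noteq> 0} = fst ` {(j, k). c j k \<noteq> 0}" by force
    then show ?thesis using f by simp
  qed
  show ?thesis unfolding bnd_def
  proof (intro allI impI)
    fix j k assume jk: "c j k \<noteq> 0"
    then have "c k j \<noteq> 0" using sy[of k j] by auto
    then have "j \<in> {j. \<exists>k. c j k \<noteq> 0}" "k \<in> {j. \<exists>k. c j k \<noteq> 0}" using jk by auto
    then show "j \<le> zdeg c \<and> k \<le> zdeg c" unfolding zdeg_def using False fin by auto
  qed
qed

theorem lemma4p1:
  fixes c :: "nat \<Rightarrow> nat \<Rightarrow> complex"
  assumes "hsym c"
  shows "(inQ1 c \<longleftrightarrow> inQ1 (reflect c)) \<and> (inQ1' c \<longleftrightarrow> inQ1' (reflect c))"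
proof -
  define m where "m = zdeg c"
  have rdef: "reflect c = RR m c" unfolding reflect_def RR_def m_def by simp
  have b: "bnd m c" unfolding m_def by (rule bnd_zdeg[OF assms])
  have hr: "hsym (reflect c)" unfolding rdef by (rule hsym_RR[OF assms])
  have rel1: "\<forall>z. z \<noteq> 0 \<longrightarrow> heval (reflect c) z = of_real (cmod z ^ (2 * m)) * heval c (1 / z)"
    unfolding rdef using heval_RR[OF b] by blast
  have rel2: "\<forall>z. z \<noteq> 0 \<longrightarrow> heval c z = of_real (cmod z ^ (2 * m)) * heval (reflect c) (1 / z)"
  proof (intro allI impI)
    fix z :: complex assume z: "z \<noteq> 0"
    have "heval (reflect c) (1 / z) = of_real (cmod (1/z) ^ (2 * m)) * heval c z"
      using rel1 z by simp
    moreover have "complex_of_real (cmod z ^ (2 * m)) * of_real (cmod (1/z) ^ (2 * m)) = 1"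
      using z by (simp add: norm_divide power_divide flip: of_real_mult)
    ultimately show "heval c z = of_real (cmod z ^ (2 * m)) * heval (reflect c) (1 / z)"
      by (metis (no_types, lifting) mult.assoc mult_1)
  qed
  have A: "inQ1 c \<longleftrightarrow> inQ1 (reflect c)"
  proof
    assume "inQ1 c"
    then obtain F G where G: "\<exists>g\<in>set G. g \<noteq> 0"
      and eq: "\<forall>z. heval c z * of_real (normsq G z) = of_real (normsq F z)"
      unfolding inQ1_def by blast
    show "inQ1 (reflect c)" unfolding inQ1_def using hr Q_transfer[OF rel1 G eq] by blast
  next
    assume "inQ1 (reflect c)"
    then obtain F G where G: "\<exists>g\<in>set G. g \<noteq> 0"
      and eq: "\<forall>z. heval (reflect c) z * of_real (normsq G z) = of_real (normsq F z)"
      unfolding inQ1_def by blast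
    show "inQ1 c" unfolding inQ1_def using assms Q_transfer[OF rel2 G eq] by blast
  qed
  have B: "inQ1' c \<longleftrightarrow> inQ1' (reflect c)"
  proof
    assume "inQ1' c"
    then obtain s F where nn: "\<forall>z. 0 \<le> Re (heval c z)" and hs: "hsym s"
      and snn: "\<forall>z. 0 \<le> Re (heval s z)" and snz: "\<exists>z. heval s z \<noteq> 0"
      and eq: "\<forall>z. heval c z * heval s z = of_real (normsq F z)"
      unfolding inQ1'_def by blast
    have "\<forall>z. 0 \<le> Re (heval (reflect c) z)" by (rule nonneg_transfer[OF rel1 nn])
    then show "inQ1' (reflect c)" unfolding inQ1'_def
      using hr Q'_transfer[OF rel1 hs snn snz eq] by blast
  next
    assume "inQ1' (reflect c)"
    then obtain s F where nn: "\<forall>z. 0 \<le> Re (heval (reflect c) z)" and hs: "hsym s"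
      and snn: "\<forall>z. 0 \<le> Re (heval s z)" and snz: "\<exists>z. heval s z \<noteq> 0"
      and eq: "\<forall>z. heval (reflect c) z * heval s z = of_real (normsq F z)"
      unfolding inQ1'_def by blast
    have "\<forall>z. 0 \<le> Re (heval c z)" by (rule nonneg_transfer[OF rel2 nn])
    then show "inQ1' c" unfolding inQ1'_def
      using assms Q'_transfer[OF rel2 hs snn snz eq] by blast
  qed
  show ?thesis using A B by blast
qed

end
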